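(* Let $(W,\mathrm d)$ and $(W_h,\mathrm d_h)$ be Hilbert complexes, with morphisms $i_h\colon W_h\to W$ and $\pi_h\colon W\to W_h$ such that $\pi_h^k\circ i_h^k=\mathrm{id}_{W_h^k}$ for each $k$. Suppose that for all $k$, \[\|q-i_h^k\pi_h^kq\|<\|q\|\quad\text{for all } q\in\mathfrak H^k,\ q\neq 0.\] Then the map induced by $\pi_h$ on reduced cohomology, $[z]\mapsto[\pi_hz]$, is an isomorphism $\mathfrak Z^k/\overline{\mathfrak B^k}\to\mathfrak Z_h^k/\overline{\mathfrak B_h^k}$ for each $k$ (and hence so is the map induced by $i_h$, its inverse).
   Context: A Hilbert complex $(W,\mathrm d)$ is a sequence of Hilbert spaces $W^k$ together with closed, densely defined (possibly unbounded) linear maps $\mathrm d^k\colon V^k\subset W^k\to V^{k+1}\subset W^{k+1}$ satisfying $\mathrm d^k\circ\mathrm d^{k-1}=0$. A morphism $f\colon(W,\mathrm d)\to(W',\mathrm d')$ is a sequence of bounded linear maps $f^k\colon W^k\to W'^k$ with $f^kV^k\subset V'^k$ and $\mathrm d'^kf^k=f^{k+1}\mathrm d^k$ on $V^k$. For $(W,\mathrm d)$: $\mathfrak Z^k=\ker\mathrm d^k$, $\mathfrak B^k=\mathrm d^{k-1}V^{k-1}$, the harmonic space is $\mathfrak H^k=\mathfrak Z^k\cap(\mathfrak B^k)^{\perp}$ (orthogonal complement in $W^k$), and the reduced cohomology space is $\mathfrak Z^k/\overline{\mathfrak B^k}$; similarly $\mathfrak Z_h^k,\mathfrak B_h^k$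 for $(W_h,\mathrm d_h)$. Norms $\|\cdot\|$ are those of $W^k$. *)

theory Defs
  imports "HOL-Analysis.Analysis"
begin

text \<open>The (real) Hilbert spaces W k are modelled as
closed linear subspaces of one ambient real Hilbert space 'a (norm and inner product are
those of 'a). V k is the domain of the closed densely defined operator d k.\<close>

definition linear_on_subspace :: "'a::real_vector set \<Rightarrow> ('a \<Rightarrow> 'b::real_vector) \<Rightarrow> bool" where
  "linear_on_subspace S f \<longleftrightarrow> subspace S \<and>
     (\<forall>x\<in>S. \<forall>y\<in>S. f (x + y) = f x + f y) \<and> (\<forall>c. \<forall>x\<in>S. f (c *\<^sub>R x) = c *\<^sub>R f x)"

definition hilbert_complex ::
  "(int \<Rightarrow> 'a::{real_inner,complete_space} set) \<Rightarrow> (int \<Rightarrow> 'a set) \<Rightarrow> (int \<Rightarrow> 'a \<Rightarrow> 'a) \<Rightarrow> bool" where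
  "hilbert_complex W V d \<longleftrightarrow> (\<forall>k.
      subspace (W k) \<and> closed (W k) \<and>
      V k \<subseteq> W k \<and> W k \<subseteq> closure (V k) \<and>
      linear_on_subspace (V k) (d k) \<and>
      d k ` V k \<subseteq> V (k + 1) \<and>
      closed {(x, d k x) | x. x \<in> V k} \<and>
      (\<forall>x\<in>V k. d (k + 1) (d k x) = 0))"

definition hc_morphism ::
  "(int \<Rightarrow> 'a::{real_inner,complete_space} set) \<Rightarrow> (int \<Rightarrow> 'a set) \<Rightarrow> (int \<Rightarrow> 'a \<Rightarrow> 'a) \<Rightarrow>
   (int \<Rightarrow> 'b::{real_inner,complete_space} set) \<Rightarrow> (int \<Rightarrow> 'b set) \<Rightarrow> (int \<Rightarrow> 'b \<Rightarrow> 'b) \<Rightarrow>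
   (int \<Rightarrow> 'a \<Rightarrow> 'b) \<Rightarrow> bool" where
  "hc_morphism W V d W' V' d' f \<longleftrightarrow> (\<forall>k.
      linear_on_subspace (W k) (f k) \<and>
      f k ` W k \<subseteq> W' k \<and>
      (\<exists>C. \<forall>x\<in>W k. norm (f k x) \<le> C * norm x) \<and>
      f k ` V k \<subseteq> V' k \<and>
      (\<forall>x\<in>V k. d' k (f k x) = f (k + 1) (d k x)))"

definition cycles :: "(int \<Rightarrow> 'a set) \<Rightarrow> (int \<Rightarrow> 'a \<Rightarrow> 'a::real_vector) \<Rightarrow> int \<Rightarrow> 'a set" where
  "cycles V d k = {x \<in> V k. d k x = 0}"

definition boundaries :: "(int \<Rightarrow> 'a set) \<Rightarrow> (int \<Rightarrow> 'a \<Rightarrow> 'a::real_vector) \<Rightarrow> int \<Rightarrow> 'a set" where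
  "boundaries V d k = d (k - 1) ` V (k - 1)"

definition harmonic :: "(int \<Rightarrow> 'a set) \<Rightarrow> (int \<Rightarrow> 'a \<Rightarrow> 'a::real_inner) \<Rightarrow> int \<Rightarrow> 'a set" where
  "harmonic V d k = {z \<in> cycles V d k. \<forall>b\<in>boundaries V d k. inner z b = 0}"

text \<open>Reduced cohomology Z^k / closure(B^k), with classes represented as cosets z + closure(B^k).\<close>
definition rclass :: "(int \<Rightarrow> 'a set) \<Rightarrow> (int \<Rightarrow> 'a \<Rightarrow> 'a::real_normed_vector) \<Rightarrow> int \<Rightarrow> 'a \<Rightarrow> 'a set" where
  "rclass V d k z = (\<lambda>b. z + b) ` closure (boundaries V d k)"

definition reduced_cohomology :: "(int \<Rightarrow> 'a set) \<Rightarrow> (int \<Rightarrow> 'a \<Rightarrow> 'a::real_normed_vector) \<Rightarrow> int \<Rightarrow> 'a set set" where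
  "reduced_cohomology V d k = rclass V d k ` cycles V d k"

definition induced_map ::
  "(int \<Rightarrow> 'b set) \<Rightarrow> (int \<Rightarrow> 'b \<Rightarrow> 'b::real_normed_vector) \<Rightarrow> (int \<Rightarrow> 'a \<Rightarrow> 'b) \<Rightarrow> int \<Rightarrow> 'a set \<Rightarrow> 'b set" where
  "induced_map V' d' f k C = rclass V' d' k (f k (SOME z. z \<in> C))"

end

theory Submission
  imports Defs "HOL-Analysis.Analysis"
begin


lemma subspace_closure_sub:
  fixes S :: "'a::real_normed_vector set"
  assumes "subspace S" shows "subspace (closure S)"
  unfolding subspace_def
proof (intro conjI ballI allI)
  show "0 \<in> closure S" using assms closure_subset subspace_0 by blast
next
  fix x y assume x: "x \<in> closure S" and y: "y \<in> closure S"
  have "(\<lambda>p. fst p + snd p) ` closure (S \<times> S) \<subseteq> closure S"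
  proof (rule image_closure_subset)
    show "continuous_on (closure (S \<times> S)) (\<lambda>p. fst p + snd p)"
      by (intro continuous_intros)
    show "(\<lambda>p. fst p + snd p) ` (S \<times> S) \<subseteq> closure S"
      using assms closure_subset subspace_add by fastforce
  qed auto
  moreover have "(x, y) \<in> closure (S \<times> S)" using x y by (simp add: closure_Times)
  ultimately show "x + y \<in> closure S" by force
next
  fix c x assume x: "x \<in> closure S"
  have "(\<lambda>p. c *\<^sub>R p) ` closure S \<subseteq> closure S"
  proof (rule image_closure_subset)
    show "continuous_on (closure S) (\<lambda>p. c *\<^sub>R p)" by (intro continuous_intros)
    show "(\<lambda>p. c *\<^sub>R p) ` S \<subseteq> closure S"
      using assms closure_subset subspace_scale by fastforce
  qed auto
  then show "c *\<^sub>R x \<in> closure S" using x by blast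
qed

lemma parallelogram:
  fixes a b :: "'a::real_inner"
  shows "(norm (a - b))\<^sup>2 + (norm (a + b))\<^sup>2 = 2 * (norm a)\<^sup>2 + 2 * (norm b)\<^sup>2"
  by (simp add: power2_norm_eq_inner inner_diff inner_add inner_commute algebra_simps)

lemma proj_exists:
  fixes S :: "'a::{real_inner,complete_space} set"
  assumes sub: "subspace S" and cl: "closed S"
  shows "\<exists>p\<in>S. \<forall>s\<in>S. inner (x - p) s = 0"
proof -
  define D where "D = (\<lambda>s. (norm (x - s))\<^sup>2) ` S"
  define \<delta> where "\<delta> = Inf D"
  have ne: "D \<noteq> {}" using sub subspace_0 unfolding D_def by blast
  have bdd: "bdd_below D" unfolding D_def by (auto intro!: bdd_belowI[of _ 0])
  have low: "\<delta> \<le> (norm (x - s))\<^sup>2" if "s \<in> S" for s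
    unfolding \<delta>_def using bdd that by (auto simp: D_def intro!: cInf_lower)
  have "\<exists>s\<in>S. (norm (x - s))\<^sup>2 < \<delta> + 1 / (real n + 1)" for n
  proof -
    have "Inf D < \<delta> + 1 / (real n + 1)" unfolding \<delta>_def by simp
    then obtain t where "t \<in> D" "t < \<delta> + 1 / (real n + 1)" using cInf_lessD[OF ne] by blast
    then show ?thesis unfolding D_def by auto
  qed
  then obtain s where sS: "\<And>n. s n \<in> S" and sb: "\<And>n. (norm (x - s n))\<^sup>2 < \<delta> + 1 / (real n + 1)"
    by metis
  have key: "(norm (s n - s m))\<^sup>2 \<le> 2 / (real n + 1) + 2 / (real m + 1)" for n m
  proof -
    have mid: "(1/2) *\<^sub>R (s n + s m) \<in> S" using sS sub by (simp add: subspace_add subspace_scale)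
    have "(norm ((x - s n) - (x - s m)))\<^sup>2 + (norm ((x - s n) + (x - s m)))\<^sup>2
       = 2 * (norm (x - s n))\<^sup>2 + 2 * (norm (x - s m))\<^sup>2" by (rule parallelogram)
    moreover have "(x - s n) + (x - s m) = 2 *\<^sub>R (x - (1/2) *\<^sub>R (s n + s m))"
      by (simp add: algebra_simps scaleR_2)
    moreover have "(norm (2 *\<^sub>R (x - (1/2) *\<^sub>R (s n + s m))))\<^sup>2 = 4 * (norm (x - (1/2) *\<^sub>R (s n + s m)))\<^sup>2"
      by (simp add: power2_eq_square)
    moreover have "(x - s n) - (x - s m) = s m - s n" by simp
    moreover have "norm (s m - s n) = norm (s n - s m)" by (rule norm_minus_commute)
    ultimately have "(norm (s n - s m))\<^sup>2 = 2 * (norm (x - s n))\<^sup>2 + 2 * (norm (x - s m))\<^sup>2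
        - 4 * (norm (x - (1/2) *\<^sub>R (s n + s m)))\<^sup>2" by simp
    with low[OF mid] sb[of n] sb[of m] show ?thesis by linarith
  qed
  have "Cauchy s"
  proof (rule metric_CauchyI)
    fix e :: real assume e: "e > 0"
    obtain M :: nat where M: "4 / e\<^sup>2 < real M" using reals_Archimedean2 by blast
    have Mpos: "4 / (real M + 1) < e\<^sup>2"
    proof -
      have "4 < e\<^sup>2 * real M" using M e by (simp add: field_simps)
      also have "\<dots> \<le> e\<^sup>2 * (real M + 1)" using e by simp
      finally show ?thesis by (simp add: field_simps)
    qed
    show "\<exists>M. \<forall>m\<ge>M. \<forall>n\<ge>M. dist (s m) (s n) < e"
    proof (intro exI allI impI)
      fix m n assume m: "m \<ge> M" and n: "n \<ge> M"
      have "2 / (real m + 1) \<le> 2 / (real M + 1)" using m by (simp add: frac_le)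
      moreover have "2 / (real n + 1) \<le> 2 / (real M + 1)" using n by (simp add: frac_le)
      ultimately have "(norm (s m - s n))\<^sup>2 < e\<^sup>2" using key[of m n] Mpos by linarith
      then have "norm (s m - s n) < e" using e by (simp add: power_less_imp_less_base)
      then show "dist (s m) (s n) < e" by (simp add: dist_norm)
    qed
  qed
  then obtain p where lim: "s \<longlonglongrightarrow> p" using convergent_eq_Cauchy by blast
  have pS: "p \<in> S" using cl sS lim closed_sequentially by blast
  have "(\<lambda>n. (norm (x - s n))\<^sup>2) \<longlonglongrightarrow> (norm (x - p))\<^sup>2"
    by (intro tendsto_intros lim)
  moreover have "(\<lambda>n. \<delta> + 1 / (real n + 1)) \<longlonglongrightarrow> \<delta> + 0"
    using LIMSEQ_inverse_real_of_nat by (intro tendsto_intros) (simp add: inverse_eq_divide add.commute)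
  ultimately have popt: "(norm (x - p))\<^sup>2 \<le> \<delta>"
    using sb by (intro LIMSEQ_le[of _ _ "\<lambda>n. \<delta> + 1 / (real n + 1)"]) (auto intro: less_imp_le)
  show ?thesis
  proof (intro bexI[OF _ pS] ballI)
    fix t assume t: "t \<in> S"
    define r where "r = x - p"
    define a where "a = inner r t"
    define c where "c = (norm t)\<^sup>2"
    have ineq: "2 * u * a \<le> u\<^sup>2 * c" for u
    proof -
      have "p + u *\<^sub>R t \<in> S" using sub pS t by (simp add: subspace_add subspace_scale)
      then have "(norm r)\<^sup>2 \<le> (norm (r - u *\<^sub>R t))\<^sup>2" using low popt unfolding r_def
        by (metis (no_types, lifting) diff_diff_add order_trans)
      also have "\<dots> = (norm r)\<^sup>2 - 2 * u * a + u\<^sup>2 * c"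
        unfolding a_def c_def power2_norm_eq_inner
        by (simp add: inner_diff_left inner_diff_right inner_commute algebra_simps power2_eq_square)
      finally show ?thesis by simp
    qed
    have c0: "c \<ge> 0" unfolding c_def by simp
    have "2 * (a / (c+1)) * a \<le> (a / (c+1))\<^sup>2 * c" by (rule ineq)
    then have "2 * (a / (c+1)) * a * (c+1)\<^sup>2 \<le> (a / (c+1))\<^sup>2 * c * (c+1)\<^sup>2"
      by (intro mult_right_mono) auto
    moreover have "2 * (a / (c+1)) * a * (c+1)\<^sup>2 = 2 * a * a * (c + 1)" using c0
      by (simp add: power2_eq_square field_simps)
    moreover have "(a / (c+1))\<^sup>2 * c * (c+1)\<^sup>2 = a * a * c" using c0
      by (simp add: power_divide power2_eq_square)
    ultimately have "2 * a * a * (c + 1) \<le> a * a * c" by simp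
    then have "a * a * (c + 2) \<le> 0" by (simp add: algebra_simps)
    moreover have "a * a * (c + 2) \<ge> 0" using c0 by simp
    ultimately have "a * a * (c + 2) = 0" by linarith
    then have "a = 0" using c0 by simp
    then show "inner (x - p) t = 0" by (simp add: a_def r_def)
  qed
qed


lemma los_diff:
  assumes "linear_on_subspace S f" "x \<in> S" "y \<in> S"
  shows "f (x - y) = f x - f y"
proof -
  have s: "subspace S" and add: "\<forall>x\<in>S. \<forall>y\<in>S. f (x + y) = f x + f y"
    and sc: "\<forall>c. \<forall>x\<in>S. f (c *\<^sub>R x) = c *\<^sub>R f x"
    using assms(1) by (simp_all add: linear_on_subspace_def)
  have ny: "(-1) *\<^sub>R y \<in> S" using s assms(3) by (rule subspace_scale)
  have "f (x + (-1) *\<^sub>R y) = f x + f ((-1) *\<^sub>R y)" using add assms(2) ny by blast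
  moreover have "f ((-1) *\<^sub>R y) = (-1) *\<^sub>R f y" using sc assms(3) by blast
  ultimately have "f (x + (-1) *\<^sub>R y) = f x - f y" by simp
  then show ?thesis by simp
qed

lemma los_0:
  assumes "linear_on_subspace S f"
  shows "f 0 = 0"
proof -
  have s: "subspace S" and sc: "\<forall>c. \<forall>x\<in>S. f (c *\<^sub>R x) = c *\<^sub>R f x"
    using assms(1) by (simp_all add: linear_on_subspace_def)
  then have z: "0 \<in> S" by (simp add: subspace_0)
  have "f (0 *\<^sub>R 0) = 0 *\<^sub>R f 0" using sc z by blast
  then show ?thesis by simp
qed

lemma morph_cont:
  assumes "hc_morphism W V d W' V' d' f"
  shows "continuous_on (W k) (f k)"
proof -
  from assms obtain C where C: "\<forall>x\<in>W k. norm (f k x) \<le> C * norm x"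
    and l: "linear_on_subspace (W k) (f k)" unfolding hc_morphism_def by blast
  have s: "subspace (W k)" using l by (simp add: linear_on_subspace_def)
  have "(max C 0)-lipschitz_on (W k) (f k)"
  proof (rule lipschitz_onI)
    fix x y assume x: "x \<in> W k" and y: "y \<in> W k"
    have "x - y \<in> W k" using s x y by (simp add: subspace_diff)
    then have "norm (f k (x - y)) \<le> C * norm (x - y)" using C by blast
    also have "\<dots> \<le> max C 0 * norm (x - y)" by (simp add: mult_right_mono)
    finally show "dist (f k x) (f k y) \<le> max C 0 * dist x y"
      using los_diff[OF l x y] by (simp add: dist_norm)
  qed simp
  then show ?thesis by (rule lipschitz_on_continuous_on)
qed

lemma hc_facts:
  assumes "hilbert_complex W V d"
  shows "subspace (W k)" "closed (W k)" "V k \<subseteq> W k" "linear_on_subspace (V k) (d k)"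
    "subspace (V k)"
  using assms unfolding hilbert_complex_def linear_on_subspace_def by blast+

lemma cycles_closed:
  assumes "hilbert_complex W V d"
  shows "closed (cycles V d k)"
proof -
  have G: "closed {(x, d k x) | x. x \<in> V k}" using assms unfolding hilbert_complex_def by blast
  have "cycles V d k = (\<lambda>x. (x, 0)) -` {(x, d k x) | x. x \<in> V k}"
    unfolding cycles_def by auto
  moreover have "closed ((\<lambda>x. (x, 0::'a)) -` {(x, d k x) | x. x \<in> V k})"
    by (rule continuous_closed_vimage[OF G]) (intro continuous_intros)
  ultimately show ?thesis by simp
qed

lemma cycles_subspace:
  assumes "hilbert_complex W V d"
  shows "subspace (cycles V d k)"
proof -
  have l: "linear_on_subspace (V k) (d k)" and s: "subspace (V k)" using hc_facts[OF assms] by auto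
  show ?thesis unfolding subspace_def cycles_def
    using l s los_0[OF l] by (auto simp: linear_on_subspace_def subspace_def)
qed

lemma boundaries_subspace:
  assumes "hilbert_complex W V d"
  shows "subspace (boundaries V d k)"
proof -
  have l: "linear_on_subspace (V (k-1)) (d (k-1))" and s: "subspace (V (k-1))"
    using hc_facts[OF assms] by auto
  show ?thesis unfolding subspace_def boundaries_def
  proof (intro conjI ballI allI)
    show "0 \<in> d (k - 1) ` V (k - 1)" using los_0[OF l] s subspace_0 by force
  next
    fix x y assume "x \<in> d (k - 1) ` V (k - 1)" "y \<in> d (k - 1) ` V (k - 1)"
    then obtain a b where "a \<in> V (k-1)" "b \<in> V (k-1)" "x = d (k-1) a" "y = d (k-1) b" by blast
    then show "x + y \<in> d (k - 1) ` V (k - 1)" using l s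
      by (auto simp: linear_on_subspace_def subspace_def intro!: image_eqI[of _ _ "a + b"])
  next
    fix c x assume "x \<in> d (k - 1) ` V (k - 1)"
    then obtain a where "a \<in> V (k-1)" "x = d (k-1) a" by blast
    then show "c *\<^sub>R x \<in> d (k - 1) ` V (k - 1)" using l s
      by (auto simp: linear_on_subspace_def subspace_def intro!: image_eqI[of _ _ "c *\<^sub>R a"])
  qed
qed

lemma boundaries_cycles:
  assumes "hilbert_complex W V d"
  shows "boundaries V d k \<subseteq> cycles V d k"
proof
  fix b assume "b \<in> boundaries V d k"
  then obtain x where x: "x \<in> V (k-1)" "b = d (k-1) x" unfolding boundaries_def by blast
  have "d (k - 1) ` V (k - 1) \<subseteq> V (k - 1 + 1)" "\<forall>x\<in>V (k-1). d (k - 1 + 1) (d (k-1) x) = 0"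
    using assms unfolding hilbert_complex_def by blast+
  then show "b \<in> cycles V d k" using x unfolding cycles_def by auto
qed

lemma clB_facts:
  assumes "hilbert_complex W V d"
  shows "closure (boundaries V d k) \<subseteq> cycles V d k" "subspace (closure (boundaries V d k))"
    "cycles V d k \<subseteq> W k"
proof -
  show "closure (boundaries V d k) \<subseteq> cycles V d k"
    using closure_minimal[OF boundaries_cycles[OF assms] cycles_closed[OF assms]] .
  show "subspace (closure (boundaries V d k))"
    using subspace_closure_sub[OF boundaries_subspace[OF assms]] .
  show "cycles V d k \<subseteq> W k" using hc_facts(3)[OF assms, of k] unfolding cycles_def by blast
qed

lemma morph_cycles:
  assumes "hilbert_complex W V d" "hilbert_complex W' V' d'" "hc_morphism W V d W' V' d' f"
    "z \<in> cycles V d k"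
  shows "f k z \<in> cycles V' d' k"
proof -
  have "linear_on_subspace (W (k+1)) (f (k+1))" "f k ` V k \<subseteq> V' k"
    "\<forall>x\<in>V k. d' k (f k x) = f (k + 1) (d k x)"
    using assms(3) unfolding hc_morphism_def by blast+
  then show ?thesis using assms(4) los_0 unfolding cycles_def by fastforce
qed

lemma morph_clB:
  assumes "hilbert_complex W V d" "hilbert_complex W' V' d'" "hc_morphism W V d W' V' d' f"
  shows "f k ` closure (boundaries V d k) \<subseteq> closure (boundaries V' d' k)"
proof (rule image_closure_subset)
  have "closure (boundaries V d k) \<subseteq> W k" using clB_facts[OF assms(1)] by blast
  then show "continuous_on (closure (boundaries V d k)) (f k)"
    using morph_cont[OF assms(3)] continuous_on_subset by blast
  show "f k ` boundaries V d k \<subseteq> closure (boundaries V' d' k)"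
  proof
    fix y assume "y \<in> f k ` boundaries V d k"
    then obtain x where x: "x \<in> V (k-1)" "y = f k (d (k-1) x)" unfolding boundaries_def by blast
    have "f (k-1) ` V (k-1) \<subseteq> V' (k-1)" "\<forall>x\<in>V (k-1). d' (k-1) (f (k-1) x) = f (k - 1 + 1) (d (k-1) x)"
      using assms(3) unfolding hc_morphism_def by blast+
    then have "y \<in> boundaries V' d' k" using x unfolding boundaries_def by force
    then show "y \<in> closure (boundaries V' d' k)" using closure_subset by blast
  qed
qed simp

lemma rclass_eq:
  assumes "hilbert_complex W V d" "z - z' \<in> closure (boundaries V d k)"
  shows "rclass V d k z = rclass V d k z'"
proof -
  let ?S = "closure (boundaries V d k)"
  have s: "subspace ?S" using clB_facts[OF assms(1)] by blast
  show ?thesis unfolding rclass_def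
  proof (intro equalityI subsetI)
    fix w assume "w \<in> (+) z ` ?S"
    then obtain b where b: "b \<in> ?S" "w = z + b" by blast
    then have "(z - z') + b \<in> ?S" using s assms(2) by (simp add: subspace_add)
    then show "w \<in> (+) z' ` ?S" using b by (auto intro!: image_eqI[of _ _ "z - z' + b"])
  next
    fix w assume "w \<in> (+) z' ` ?S"
    then obtain b where b: "b \<in> ?S" "w = z' + b" by blast
    then have "b - (z - z') \<in> ?S" using s assms(2) by (simp add: subspace_diff)
    then show "w \<in> (+) z ` ?S" using b by (auto intro!: image_eqI[of _ _ "b - (z - z')"])
  qed
qed

lemma induced_rclass:
  assumes "hilbert_complex W V d" "hilbert_complex W' V' d'" "hc_morphism W V d W' V' d' f"
    "z \<in> cycles V d k"
  shows "induced_map V' d' f k (rclass V d k z) = rclass V' d' k (f k z)"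
proof -
  let ?S = "closure (boundaries V d k)"
  have s1: "subspace ?S" and s2: "?S \<subseteq> cycles V d k" and s3: "cycles V d k \<subseteq> W k"
    using clB_facts[OF assms(1)] by simp_all
  have "0 \<in> ?S" using s1 by (rule subspace_0)
  then have "z + 0 \<in> (\<lambda>b. z + b) ` ?S" by (rule imageI)
  then have "z \<in> rclass V d k z" unfolding rclass_def by simp
  then have "(SOME w. w \<in> rclass V d k z) \<in> rclass V d k z" by (rule someI)
  moreover define w where "w = (SOME w. w \<in> rclass V d k z)"
  ultimately have "w \<in> rclass V d k z" by simp
  then obtain b where b1: "b \<in> ?S" and b2': "w = z + b"
    unfolding rclass_def by blast
  have b2: "(SOME w. w \<in> rclass V d k z) = z + b" using b2' w_def by simp
  have l: "linear_on_subspace (W k) (f k)" using assms(3) unfolding hc_morphism_def by blast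
  have zW: "z \<in> W k" using assms(4) s3 by (rule subsetD[rotated])
  have bW: "b \<in> W k" using b1 s2 s3 by (meson subsetD)
  have sW: "subspace (W k)" using hc_facts[OF assms(1)] by simp
  have zbW: "z + b \<in> W k" using sW zW bW by (rule subspace_add)
  have "f k (z + b) - f k z = f k b" using los_diff[OF l zbW zW] by simp
  also have "\<dots> \<in> closure (boundaries V' d' k)" using morph_clB[OF assms(1-3)] b1 by (rule subsetD[OF _ imageI])
  finally show ?thesis unfolding induced_map_def b2 by (rule rclass_eq[OF assms(2)])
qed

theorem mainTheorem3:
  fixes W V :: "int \<Rightarrow> 'a::{real_inner,complete_space} set" and d :: "int \<Rightarrow> 'a \<Rightarrow> 'a"
    and Wh Vh :: "int \<Rightarrow> 'b::{real_inner,complete_space} set" and dh :: "int \<Rightarrow> 'b \<Rightarrow> 'b"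
    and ih :: "int \<Rightarrow> 'b \<Rightarrow> 'a" and \<pi>h :: "int \<Rightarrow> 'a \<Rightarrow> 'b"
  assumes "hilbert_complex W V d"
    and "hilbert_complex Wh Vh dh"
    and "hc_morphism Wh Vh dh W V d ih"
    and "hc_morphism W V d Wh Vh dh \<pi>h"
    and "\<And>k x. x \<in> Wh k \<Longrightarrow> \<pi>h k (ih k x) = x"
    and "\<And>k q. q \<in> harmonic V d k \<Longrightarrow> q \<noteq> 0 \<Longrightarrow> norm (q - ih k (\<pi>h k q)) < norm q"
  shows "\<forall>k.
     (\<forall>z\<in>cycles V d k. \<forall>z'\<in>cycles V d k. z - z' \<in> closure (boundaries V d k) \<longrightarrow>
         \<pi>h k z - \<pi>h k z' \<in> closure (boundaries Vh dh k)) \<and>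
     bij_betw (induced_map Vh dh \<pi>h k) (reduced_cohomology V d k) (reduced_cohomology Vh dh k) \<and>
     (\<forall>C\<in>reduced_cohomology V d k. induced_map V d ih k (induced_map Vh dh \<pi>h k C) = C) \<and>
     (\<forall>C\<in>reduced_cohomology Vh dh k. induced_map Vh dh \<pi>h k (induced_map V d ih k C) = C)"


proof (intro allI conjI)
  fix k
  have hW: "hilbert_complex W V d" and hV: "hilbert_complex Wh Vh dh"
    and mi: "hc_morphism Wh Vh dh W V d ih" and mp: "hc_morphism W V d Wh Vh dh \<pi>h"
    using assms by auto
  have lp: "linear_on_subspace (W k) (\<pi>h k)" using mp unfolding hc_morphism_def by blast
  have li: "linear_on_subspace (Wh k) (ih k)" using mi unfolding hc_morphism_def by blast
  note cW = clB_facts[OF hW, of k] and cV = clB_facts[OF hV, of k]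
  show part1: "\<forall>z\<in>cycles V d k. \<forall>z'\<in>cycles V d k. z - z' \<in> closure (boundaries V d k) \<longrightarrow>
         \<pi>h k z - \<pi>h k z' \<in> closure (boundaries Vh dh k)"
  proof (intro ballI impI)
    fix z z' assume z: "z \<in> cycles V d k" "z' \<in> cycles V d k" "z - z' \<in> closure (boundaries V d k)"
    then have "\<pi>h k (z - z') \<in> closure (boundaries Vh dh k)" using morph_clB[OF hW hV mp] by blast
    moreover have "z \<in> W k" "z' \<in> W k" using z(1,2) cW(3) by blast+
    ultimately show "\<pi>h k z - \<pi>h k z' \<in> closure (boundaries Vh dh k)"
      using los_diff[OF lp] by metis
  qed
  have inj: "z \<in> closure (boundaries V d k)"
    if z: "z \<in> cycles V d k" and pz: "\<pi>h k z \<in> closure (boundaries Vh dh k)" for z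
  proof -
    obtain p where p: "p \<in> closure (boundaries V d k)"
      and orth: "\<forall>s\<in>closure (boundaries V d k). inner (z - p) s = 0"
      using proj_exists[OF cW(2)] by blast
    define q where "q = z - p"
    have qZ: "q \<in> cycles V d k" unfolding q_def
      using subspace_diff[OF cycles_subspace[OF hW] z] p cW by blast
    have qH: "q \<in> harmonic V d k" unfolding harmonic_def using qZ orth closure_subset
      by (auto simp: q_def)
    have "z \<in> W k" "p \<in> W k" using z p cW by blast+
    then have "\<pi>h k q = \<pi>h k z - \<pi>h k p" unfolding q_def by (rule los_diff[OF lp])
    moreover have "\<pi>h k p \<in> closure (boundaries Vh dh k)" using morph_clB[OF hW hV mp] p by blast
    ultimately have "\<pi>h k q \<in> closure (boundaries Vh dh k)" using pz subspace_diff[OF cV(2)] by simp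
    then have iq: "ih k (\<pi>h k q) \<in> closure (boundaries V d k)" using morph_clB[OF hV hW mi] by blast
    have "inner q (ih k (\<pi>h k q)) = 0" using orth iq q_def by blast
    then have "(norm (q - ih k (\<pi>h k q)))\<^sup>2 = (norm q)\<^sup>2 + (norm (ih k (\<pi>h k q)))\<^sup>2"
      unfolding power2_norm_eq_inner by (simp add: inner_diff_left inner_diff_right inner_commute)
    then have "norm q \<le> norm (q - ih k (\<pi>h k q))"
      by (metis le_add_same_cancel1 norm_ge_zero power2_le_imp_le zero_le_power2)
    then have "q = 0" using assms(6)[OF qH] by (meson not_less)
    then show ?thesis using p q_def by simp
  qed
  have Ci: "\<forall>C\<in>reduced_cohomology V d k. induced_map V d ih k (induced_map Vh dh \<pi>h k C) = C"
  proof
    fix C assume "C \<in> reduced_cohomology V d k"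
    then obtain z where z: "z \<in> cycles V d k" "C = rclass V d k z" unfolding reduced_cohomology_def by blast
    have pz: "\<pi>h k z \<in> cycles Vh dh k" using morph_cycles[OF hW hV mp z(1)] .
    have ipz: "ih k (\<pi>h k z) \<in> cycles V d k" using morph_cycles[OF hV hW mi pz] .
    have pzW: "\<pi>h k z \<in> Wh k" using pz cV by blast
    have "ih k (\<pi>h k z) \<in> W k" "z \<in> W k" using ipz z(1) cW(3) by blast+
    then have "\<pi>h k (ih k (\<pi>h k z) - z) = \<pi>h k (ih k (\<pi>h k z)) - \<pi>h k z"
      by (rule los_diff[OF lp])
    also have "\<dots> = 0" using assms(5)[OF pzW] by simp
    finally have "\<pi>h k (ih k (\<pi>h k z) - z) \<in> closure (boundaries Vh dh k)"
      using cV(2) subspace_0 by simp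
    moreover have "ih k (\<pi>h k z) - z \<in> cycles V d k"
      using subspace_diff[OF cycles_subspace[OF hW] ipz z(1)] .
    ultimately have "ih k (\<pi>h k z) - z \<in> closure (boundaries V d k)" using inj by blast
    then show "induced_map V d ih k (induced_map Vh dh \<pi>h k C) = C"
      unfolding z(2) induced_rclass[OF hW hV mp z(1)] induced_rclass[OF hV hW mi pz]
      by (rule rclass_eq[OF hW])
  qed
  have Cp: "\<forall>C\<in>reduced_cohomology Vh dh k. induced_map Vh dh \<pi>h k (induced_map V d ih k C) = C"
  proof
    fix C assume "C \<in> reduced_cohomology Vh dh k"
    then obtain z where z: "z \<in> cycles Vh dh k" "C = rclass Vh dh k z" unfolding reduced_cohomology_def by blast
    have iz: "ih k z \<in> cycles V d k" using morph_cycles[OF hV hW mi z(1)] .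
    have "z \<in> Wh k" using z(1) cV(3) by blast
    then have "\<pi>h k (ih k z) = z" by (rule assms(5))
    then show "induced_map Vh dh \<pi>h k (induced_map V d ih k C) = C"
      unfolding z(2) induced_rclass[OF hV hW mi z(1)] induced_rclass[OF hW hV mp iz] by simp
  qed
  show "bij_betw (induced_map Vh dh \<pi>h k) (reduced_cohomology V d k) (reduced_cohomology Vh dh k)"
  proof (rule bij_betwI)
    show "induced_map Vh dh \<pi>h k \<in> reduced_cohomology V d k \<rightarrow> reduced_cohomology Vh dh k"
    proof
      fix C assume "C \<in> reduced_cohomology V d k"
      then obtain z where z: "z \<in> cycles V d k" "C = rclass V d k z" unfolding reduced_cohomology_def by blast
      show "induced_map Vh dh \<pi>h k C \<in> reduced_cohomology Vh dh k"
        unfolding z(2) induced_rclass[OF hW hV mp z(1)] reduced_cohomology_def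
        using morph_cycles[OF hW hV mp z(1)] by (rule imageI)
    qed
    show "induced_map V d ih k \<in> reduced_cohomology Vh dh k \<rightarrow> reduced_cohomology V d k"
    proof
      fix C assume "C \<in> reduced_cohomology Vh dh k"
      then obtain z where z: "z \<in> cycles Vh dh k" "C = rclass Vh dh k z" unfolding reduced_cohomology_def by blast
      show "induced_map V d ih k C \<in> reduced_cohomology V d k"
        unfolding z(2) induced_rclass[OF hV hW mi z(1)] reduced_cohomology_def
        using morph_cycles[OF hV hW mi z(1)] by (rule imageI)
    qed
    show "\<And>x. x \<in> reduced_cohomology V d k \<Longrightarrow> induced_map V d ih k (induced_map Vh dh \<pi>h k x) = x"
      using Ci by blast
    show "\<And>y. y \<in> reduced_cohomology Vh dh k \<Longrightarrow> induced_map Vh dh \<pi>h k (induced_map V d ih k y) = y"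
      using Cp by blast
  qed
  show "\<forall>C\<in>reduced_cohomology V d k. induced_map V d ih k (induced_map Vh dh \<pi>h k C) = C" by (rule Ci)
  show "\<forall>C\<in>reduced_cohomology Vh dh k. induced_map Vh dh \<pi>h k (induced_map V d ih k C) = C" by (rule Cp)
qed

end
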